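(* Let $(L,\preceq)$ be a lattice with meet $\wedge$ and join $\vee$, and let $\delta$ be an equivalence relation on $L$. Then $\delta$ is a local congruence on $L$ if and only if, for all $a,b,c\in L$, the following two properties hold: (i) if $(a,b)\in\delta$ and $a\preceq c\preceq b$, then $(a,c)\in\delta$; (ii) $(a,b)\in\delta$ if and only if $(a\wedge b,\,a\vee b)\in\delta$.
   Context: For an equivalence relation $\delta$ on a set $L$, $[a]_\delta=\{b\in L\mid (a,b)\in\delta\}$ denotes the equivalence class of $a$. Given a lattice $(L,\preceq)$, an equivalence relation $\delta$ on $L$ is called a local congruence if (i) each equivalence class of $\delta$ is a sublattice of $L$ (closed under $\wedge$ and $\vee$ of $L$), and (ii) each equivalence class of $\delta$ is convex (if $x,y$ belong to the class and $x\preceq z\preceq y$ with $z\in L$, then $z$ belongs to the class). *)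

theory Defs
  imports Main
begin

definition eq_class :: "('a \<times> 'a) set \<Rightarrow> 'a \<Rightarrow> 'a set" where
  "eq_class \<delta> a = {b. (a, b) \<in> \<delta>}"

definition local_congruence :: "('a::lattice \<times> 'a) set \<Rightarrow> bool" where
  "local_congruence \<delta> \<longleftrightarrow> equiv UNIV \<delta> \<and>
     (\<forall>a. \<forall>x\<in>eq_class \<delta> a. \<forall>y\<in>eq_class \<delta> a. inf x y \<in> eq_class \<delta> a \<and> sup x y \<in> eq_class \<delta> a) \<and>
     (\<forall>a. \<forall>x\<in>eq_class \<delta> a. \<forall>y\<in>eq_class \<delta> a. \<forall>z. x \<le> z \<and> z \<le> y \<longrightarrow> z \<in> eq_class \<delta> a)"

end

theory Submission
  imports Defs
begin

theorem proposition3p4: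
  fixes \<delta> :: "('a::lattice \<times> 'a) set"
  assumes "equiv UNIV \<delta>"
  shows "local_congruence \<delta> \<longleftrightarrow>
    (\<forall>a b c. ((a, b) \<in> \<delta> \<and> a \<le> c \<and> c \<le> b \<longrightarrow> (a, c) \<in> \<delta>) \<and>
             ((a, b) \<in> \<delta> \<longleftrightarrow> (inf a b, sup a b) \<in> \<delta>))"
proof -
  have S: "\<And>x y. (x,y) \<in> \<delta> \<Longrightarrow> (y,x) \<in> \<delta>"
    using assms unfolding equiv_def by (meson symD)
  have T: "\<And>x y z. (x,y) \<in> \<delta> \<Longrightarrow> (y,z) \<in> \<delta> \<Longrightarrow> (x,z) \<in> \<delta>"
    using assms unfolding equiv_def by (meson transD)
  have R: "\<And>x. (x,x) \<in> \<delta>"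
    using assms unfolding equiv_def refl_on_def by blast
  show ?thesis
  proof
    assume L: "local_congruence \<delta>"
    have cl: "\<And>a x y. (a,x) \<in> \<delta> \<Longrightarrow> (a,y) \<in> \<delta> \<Longrightarrow> (a, inf x y) \<in> \<delta> \<and> (a, sup x y) \<in> \<delta>"
      using L unfolding local_congruence_def eq_class_def by blast
    have cv: "\<And>a x y z. (a,x) \<in> \<delta> \<Longrightarrow> (a,y) \<in> \<delta> \<Longrightarrow> x \<le> z \<Longrightarrow> z \<le> y \<Longrightarrow> (a, z) \<in> \<delta>"
      using L unfolding local_congruence_def eq_class_def by blast
    show "\<forall>a b c. ((a, b) \<in> \<delta> \<and> a \<le> c \<and> c \<le> b \<longrightarrow> (a, c) \<in> \<delta>) \<and>
             ((a, b) \<in> \<delta> \<longleftrightarrow> (inf a b, sup a b) \<in> \<delta>)"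
    proof (intro allI conjI impI iffI)
      fix a b c assume "(a, b) \<in> \<delta> \<and> a \<le> c \<and> c \<le> b"
      then show "(a,c) \<in> \<delta>" using cv R by blast
    next
      fix a b assume ab: "(a, b) \<in> \<delta>"
      then have "(a, inf a b) \<in> \<delta>" "(a, sup a b) \<in> \<delta>" using cl R by blast+
      then show "(inf a b, sup a b) \<in> \<delta>" using S T by blast
    next
      fix a b assume h: "(inf a b, sup a b) \<in> \<delta>"
      have "(inf a b, a) \<in> \<delta>" using cv[OF R h] by simp
      moreover have "(inf a b, b) \<in> \<delta>" using cv[OF R h] by simp
      ultimately show "(a,b) \<in> \<delta>" using S T by blast
    qed
  next
    assume H: "\<forall>a b c. ((a, b) \<in> \<delta> \<and> a \<le> c \<and> c \<le> b \<longrightarrow> (a, c) \<in> \<delta>) \<and>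
             ((a, b) \<in> \<delta> \<longleftrightarrow> (inf a b, sup a b) \<in> \<delta>)"
    have cl: "(a, inf x y) \<in> \<delta> \<and> (a, sup x y) \<in> \<delta>" if "(a,x) \<in> \<delta>" "(a,y) \<in> \<delta>" for a x y
    proof -
      have xy: "(x,y) \<in> \<delta>" using that S T by blast
      then have h: "(inf x y, sup x y) \<in> \<delta>" using H by blast
      have "(inf x y, x) \<in> \<delta>" using H[rule_format, of "inf x y" "sup x y" x] h by simp
      then have 1: "(a, inf x y) \<in> \<delta>" using that S T by blast
      have "(sup x y, x) \<in> \<delta>" using h \<open>(inf x y, x) \<in> \<delta>\<close> S T by blast
      then have "(a, sup x y) \<in> \<delta>" using that S T by blast
      with 1 show ?thesis by blast
    qed
    have cv: "(a, z) \<in> \<delta>" if "(a,x) \<in> \<delta>" "(a,y) \<in> \<delta>" "x \<le> z" "z \<le> y" for a x y z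
    proof -
      have "(x,y) \<in> \<delta>" using that S T by blast
      then have "(x,z) \<in> \<delta>" using H that by blast
      then show ?thesis using that T by blast
    qed
    show "local_congruence \<delta>"
      unfolding local_congruence_def eq_class_def using assms cl cv by blast
  qed
qed

end
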